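(* Let $M$ be a graded finitely generated faithful graded multiplication $R$-module and $U$ a proper graded submodule of $M$, and assume $J_{gr}(M)=J_{gr}(R)M$. The following are equivalent: (i) $U$ is a graded weakly $J_{gr}$-semiprime submodule of $M$; (ii) $(U:_RM)$ is a graded weakly $J_{gr}$-semiprime ideal of $R$; (iii) $U=LM$ for some graded weakly $J_{gr}$-semiprime ideal $L$ of $R$.
   Context: Standing conventions: $\Gamma$ is a group, $R=\bigoplus_{g\in\Gamma}R_g$ is a commutative $\Gamma$-graded ring with identity, and $M=\bigoplus_{g\in\Gamma}M_g$ is a unitary $\Gamma$-graded $R$-module. $h(R)$, $h(M)$ are the homogeneous elements. A submodule $U$ is graded if $U=\bigoplus_g(U\cap M_g)$. $M$ is graded finitely generated if $M=Ra_1+\dots+Ra_n$ with $a_i\in h(M)$; graded multiplication if every graded submodule equals $KM$ for some graded ideal $K$ of $R$; faithful if $\mathrm{ann}_R(M)=0$. $(U:_RM)=\{r\in R: rM\subseteq U\}$. For a graded module $N$, a graded submodule $U\neq N$ is Gr-maximal if every graded submodule between $U$ and $N$ equals $U$ or $N$; $J_{gr}(N)$ is the intersection of all Gr-maximal submodules of $N$ ($=N$ if none); $J_{gr}(R)$ is this for $N=R$. A proper graded submodule $U$ of $M$ is graded weakly $J_{gr}$-semiprime if whenever $r_g\in h(R)$, $m_h\in h(M)$, $n\in\mathbb{Z}^+$ and $0\neq r_g^nm_h\in U$, then $r_gm_h\in U+J_{gr}(M)$; a graded ideal of $R$ is graded weakly $J_{gr}$-semiprime if it is so as a (proper) submodule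 of the graded $R$-module $R$. *)

theory Defs
  imports Main "HOL.Modules"
begin

text \<open>
  The grading group \<Gamma> is a type 'g of class group_add (a group written
  additively, not assumed commutative).  The commutative ring with identity R is the whole
  type 'r :: comm_ring_1, graded by the family Rg :: 'g \<Rightarrow> 'r set.  The unitary module M is the
  whole type 'm :: ab_group_add with scalar multiplication sc :: 'r \<Rightarrow> 'm \<Rightarrow> 'm satisfying
  the axioms of the library locale module, graded by Mg :: 'g \<Rightarrow> 'm set.
  The ring R regarded as an R-module is the instance sc = (*), Mg = Rg.
\<close>

definition direct_decomp :: "('g \<Rightarrow> 'a::ab_group_add set) \<Rightarrow> bool" where
  "direct_decomp A \<longleftrightarrow>
     (\<forall>g. 0 \<in> A g \<and> (\<forall>x\<in>A g. \<forall>y\<in>A g. x + y \<in> A g) \<and> (\<forall>x\<in>A g. - x \<in> A g)) \<and>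
     (\<forall>x. \<exists>f. finite {g. f g \<noteq> 0} \<and> (\<forall>g. f g \<in> A g) \<and> x = (\<Sum>g\<in>{g. f g \<noteq> 0}. f g)) \<and>
     (\<forall>f. finite {g. f g \<noteq> 0} \<and> (\<forall>g. f g \<in> A g) \<and> (\<Sum>g\<in>{g. f g \<noteq> 0}. f g) = 0
          \<longrightarrow> (\<forall>g. f g = 0))"

definition graded_ring :: "('g::group_add \<Rightarrow> 'r::comm_ring_1 set) \<Rightarrow> bool" where
  "graded_ring Rg \<longleftrightarrow> direct_decomp Rg \<and>
     (\<forall>g h. \<forall>a\<in>Rg g. \<forall>b\<in>Rg h. a * b \<in> Rg (g + h))"

definition graded_module ::
  "('g::group_add \<Rightarrow> 'r::comm_ring_1 set) \<Rightarrow> ('r \<Rightarrow> 'm::ab_group_add \<Rightarrow> 'm) \<Rightarrow> ('g \<Rightarrow> 'm set) \<Rightarrow> bool" where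
  "graded_module Rg sc Mg \<longleftrightarrow> graded_ring Rg \<and> module sc \<and> direct_decomp Mg \<and>
     (\<forall>g h. \<forall>a\<in>Rg g. \<forall>m\<in>Mg h. sc a m \<in> Mg (g + h))"

definition homog :: "('g \<Rightarrow> 'a set) \<Rightarrow> 'a set" where
  "homog A = (\<Union>g. A g)"

definition graded_submodule ::
  "('r::comm_ring_1 \<Rightarrow> 'm::ab_group_add \<Rightarrow> 'm) \<Rightarrow> ('g \<Rightarrow> 'm set) \<Rightarrow> 'm set \<Rightarrow> bool" where
  "graded_submodule sc Mg U \<longleftrightarrow> module.subspace sc U \<and>
     (\<forall>u\<in>U. \<exists>f. finite {g. f g \<noteq> 0} \<and> (\<forall>g. f g \<in> U \<inter> Mg g) \<and> u = (\<Sum>g\<in>{g. f g \<noteq> 0}. f g))"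

definition graded_ideal :: "('g \<Rightarrow> 'r::comm_ring_1 set) \<Rightarrow> 'r set \<Rightarrow> bool" where
  "graded_ideal Rg I \<longleftrightarrow> graded_submodule (*) Rg I"

definition ideal_times_module :: "('r::comm_ring_1 \<Rightarrow> 'm::ab_group_add \<Rightarrow> 'm) \<Rightarrow> 'r set \<Rightarrow> 'm set" where
  "ideal_times_module sc K = module.span sc {sc k m | k m. k \<in> K}"

definition colon :: "('r \<Rightarrow> 'm \<Rightarrow> 'm) \<Rightarrow> 'm set \<Rightarrow> 'r set" where
  "colon sc U = {r. \<forall>m. sc r m \<in> U}"

definition graded_fin_gen :: "('r::comm_ring_1 \<Rightarrow> 'm::ab_group_add \<Rightarrow> 'm) \<Rightarrow> ('g \<Rightarrow> 'm set) \<Rightarrow> bool" where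
  "graded_fin_gen sc Mg \<longleftrightarrow> (\<exists>A. finite A \<and> A \<subseteq> homog Mg \<and> module.span sc A = UNIV)"

definition faithful :: "('r::comm_ring_1 \<Rightarrow> 'm::ab_group_add \<Rightarrow> 'm) \<Rightarrow> bool" where
  "faithful sc \<longleftrightarrow> (\<forall>r. (\<forall>m. sc r m = 0) \<longrightarrow> r = 0)"

definition graded_multiplication ::
  "('g \<Rightarrow> 'r::comm_ring_1 set) \<Rightarrow> ('r \<Rightarrow> 'm::ab_group_add \<Rightarrow> 'm) \<Rightarrow> ('g \<Rightarrow> 'm set) \<Rightarrow> bool" where
  "graded_multiplication Rg sc Mg \<longleftrightarrow>
     (\<forall>U. graded_submodule sc Mg U \<longrightarrow> (\<exists>K. graded_ideal Rg K \<and> U = ideal_times_module sc K))"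

definition gr_maximal :: "('r::comm_ring_1 \<Rightarrow> 'm::ab_group_add \<Rightarrow> 'm) \<Rightarrow> ('g \<Rightarrow> 'm set) \<Rightarrow> 'm set \<Rightarrow> bool" where
  "gr_maximal sc Mg U \<longleftrightarrow> graded_submodule sc Mg U \<and> U \<noteq> UNIV \<and>
     (\<forall>V. graded_submodule sc Mg V \<and> U \<subseteq> V \<longrightarrow> V = U \<or> V = UNIV)"

definition J_gr :: "('r::comm_ring_1 \<Rightarrow> 'm::ab_group_add \<Rightarrow> 'm) \<Rightarrow> ('g \<Rightarrow> 'm set) \<Rightarrow> 'm set" where
  "J_gr sc Mg = \<Inter> {U. gr_maximal sc Mg U}"

definition set_plus :: "'a::plus set \<Rightarrow> 'a set \<Rightarrow> 'a set" where
  "set_plus A B = {a + b | a b. a \<in> A \<and> b \<in> B}"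

definition gr_weakly_J_semiprime ::
  "('g \<Rightarrow> 'r::comm_ring_1 set) \<Rightarrow> ('r \<Rightarrow> 'm::ab_group_add \<Rightarrow> 'm) \<Rightarrow> ('g \<Rightarrow> 'm set) \<Rightarrow> 'm set \<Rightarrow> bool" where
  "gr_weakly_J_semiprime Rg sc Mg U \<longleftrightarrow> graded_submodule sc Mg U \<and> U \<noteq> UNIV \<and>
     (\<forall>r\<in>homog Rg. \<forall>m\<in>homog Mg. \<forall>n::nat. n \<ge> 1 \<longrightarrow> sc (r ^ n) m \<noteq> 0 \<longrightarrow> sc (r ^ n) m \<in> U \<longrightarrow>
        sc r m \<in> set_plus U (J_gr sc Mg))"

definition gr_weakly_J_semiprime_ideal :: "('g \<Rightarrow> 'r::comm_ring_1 set) \<Rightarrow> 'r set \<Rightarrow> bool" where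
  "gr_weakly_J_semiprime_ideal Rg I \<longleftrightarrow> gr_weakly_J_semiprime Rg (*) Rg I"

end

theory Submission
  imports Defs
begin

lemma module_mult: "module ((*) :: 'r::comm_ring_1 \<Rightarrow> 'r \<Rightarrow> 'r)"
  by unfold_locales (simp_all add: algebra_simps)

lemma sum_supp_eq:
  assumes "finite S" "{g. f g \<noteq> 0} \<subseteq> S"
  shows "(\<Sum>g\<in>S. f g) = (\<Sum>g\<in>{g. f g \<noteq> (0::'a::comm_monoid_add)}. f g)"
  using assms by (intro sum.mono_neutral_right) auto

context module begin

lemma subspace_set_plus:
  assumes "subspace S" "subspace T"
  shows "subspace (set_plus S T)"
  unfolding subspace_def set_plus_def
proof (intro conjI allI ballI impI)
  show "0 \<in> {a + b |a b. a \<in> S \<and> b \<in> T}"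
    using assms subspace_0 by force
next
  fix x y assume "x \<in> {a + b |a b. a \<in> S \<and> b \<in> T}" "y \<in> {a + b |a b. a \<in> S \<and> b \<in> T}"
  then obtain a b a' b' where "x = a + b" "y = a' + b'" "a \<in> S" "b \<in> T" "a' \<in> S" "b' \<in> T" by auto
  then show "x + y \<in> {a + b |a b. a \<in> S \<and> b \<in> T}"
  proof -
    have "a + a' \<in> S" "b + b' \<in> T" using assms subspace_add \<open>a \<in> S\<close> \<open>b \<in> T\<close> \<open>a' \<in> S\<close> \<open>b' \<in> T\<close> by auto
    moreover have "x + y = (a + a') + (b + b')" using \<open>x = a + b\<close> \<open>y = a' + b'\<close> by (simp add: algebra_simps)
    ultimately show ?thesis by blast
  qed
next
  fix c x assume "x \<in> {a + b |a b. a \<in> S \<and> b \<in> T}"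
  then obtain a b where "x = a + b" "a \<in> S" "b \<in> T" by auto
  then show "c *s x \<in> {a + b |a b. a \<in> S \<and> b \<in> T}"
  proof -
    have "c *s a \<in> S" "c *s b \<in> T" using assms subspace_scale \<open>a \<in> S\<close> \<open>b \<in> T\<close> by auto
    moreover have "c *s x = c *s a + c *s b" using \<open>x = a + b\<close> by (simp add: algebra_simps)
    ultimately show ?thesis by blast
  qed
qed

lemma set_plus_left: "subspace T \<Longrightarrow> x \<in> S \<Longrightarrow> x \<in> set_plus S T"
  unfolding set_plus_def using subspace_0 by force

lemma set_plus_right: "subspace S \<Longrightarrow> x \<in> T \<Longrightarrow> x \<in> set_plus S T"
  unfolding set_plus_def using subspace_0 by force

lemma itm_subspace: "subspace (ideal_times_module scale K)"
  by (simp add: ideal_times_module_def)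

lemma itm_base: "k \<in> K \<Longrightarrow> scale k m \<in> ideal_times_module scale K"
  unfolding ideal_times_module_def by (rule span_base) blast

end

lemma graded_module_module: "graded_module Rg sc Mg \<Longrightarrow> module sc"
  by (simp add: graded_module_def)

lemma graded_ring_module: "graded_ring Rg \<Longrightarrow> graded_module Rg (*) Rg"
  by (simp add: graded_module_def graded_ring_def module_mult)

lemma graded_cyclic:
  assumes gm: "graded_module Rg sc Mg" and mh: "m \<in> Mg h"
  shows "graded_submodule sc Mg (module.span sc {m})"
proof -
  interpret module sc using gm by (rule graded_module_module)
  have dR: "direct_decomp Rg" and mul: "\<And>g h a m. a \<in> Rg g \<Longrightarrow> m \<in> Mg h \<Longrightarrow> sc a m \<in> Mg (g + h)"
    using gm by (auto simp: graded_module_def graded_ring_def)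
  show ?thesis unfolding graded_submodule_def
  proof (intro conjI ballI)
    show "subspace (span {m})" by simp
    fix u assume "u \<in> span {m}"
    then obtain r where u: "u = sc r m" by (auto simp: span_singleton)
    from dR obtain f where f: "finite {g. f g \<noteq> 0}" "\<And>g. f g \<in> Rg g" "r = (\<Sum>g\<in>{g. f g \<noteq> 0}. f g)"
      unfolding direct_decomp_def by blast
    define S where "S = {g. f g \<noteq> 0}"
    define F where "F d = sc (f (d - h)) m" for d
    have sub: "{d. F d \<noteq> 0} \<subseteq> (\<lambda>g. g + h) ` S"
    proof
      fix d assume "d \<in> {d. F d \<noteq> 0}"
      then have "f (d - h) \<noteq> 0" by (auto simp: F_def)
      then show "d \<in> (\<lambda>g. g + h) ` S" unfolding S_def
        by (intro image_eqI[of _ _ "d - h"]) auto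
    qed
    have finS: "finite S" using f S_def by simp
    have inj: "inj_on (\<lambda>g. g + h) S" by (rule inj_onI) simp
    have "(\<Sum>d\<in>{d. F d \<noteq> 0}. F d) = (\<Sum>d\<in>(\<lambda>g. g + h) ` S. F d)"
      by (rule sum_supp_eq[symmetric]) (use sub finS in auto)
    also have "\<dots> = (\<Sum>g\<in>S. F (g + h))" by (rule sum.reindex[OF inj, unfolded comp_def])
    also have "\<dots> = (\<Sum>g\<in>S. sc (f g) m)" by (simp add: F_def)
    also have "\<dots> = u" using u f(3) S_def by (simp add: scale_sum_left)
    finally have "u = (\<Sum>d\<in>{d. F d \<noteq> 0}. F d)" ..
    moreover have "finite {d. F d \<noteq> 0}" using sub finS finite_subset by blast
    moreover have "F d \<in> span {m} \<inter> Mg d" for d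
    proof -
      have "F d \<in> Mg (d - h + h)" unfolding F_def by (rule mul[OF f(2) mh])
      then show ?thesis by (auto simp: F_def span_singleton)
    qed
    ultimately show "\<exists>f. finite {g. f g \<noteq> 0} \<and> (\<forall>g. f g \<in> span {m} \<inter> Mg g) \<and> u = (\<Sum>g\<in>{g. f g \<noteq> 0}. f g)"
      by blast
  qed
qed


lemma graded_sum:
  assumes gm: "graded_module Rg sc Mg" and P: "graded_submodule sc Mg P" and Q: "graded_submodule sc Mg Q"
  shows "graded_submodule sc Mg (set_plus P Q)"
proof -
  interpret module sc using gm by (rule graded_module_module)
  have dM: "direct_decomp Mg" using gm by (simp add: graded_module_def)
  have addM: "\<And>g x y. x \<in> Mg g \<Longrightarrow> y \<in> Mg g \<Longrightarrow> x + y \<in> Mg g"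
    using dM by (simp add: direct_decomp_def)
  have sP: "subspace P" and sQ: "subspace Q" using P Q by (auto simp: graded_submodule_def)
  show ?thesis unfolding graded_submodule_def
  proof (intro conjI ballI)
    show "subspace (set_plus P Q)" by (rule subspace_set_plus[OF sP sQ])
    fix u assume "u \<in> set_plus P Q"
    then obtain p q where u: "u = p + q" "p \<in> P" "q \<in> Q" by (auto simp: set_plus_def)
    obtain f where f: "finite {g. f g \<noteq> 0}" "\<And>g. f g \<in> P \<inter> Mg g" "p = (\<Sum>g\<in>{g. f g \<noteq> 0}. f g)"
      using P u(2) unfolding graded_submodule_def by blast
    obtain h where h: "finite {g. h g \<noteq> 0}" "\<And>g. h g \<in> Q \<inter> Mg g" "q = (\<Sum>g\<in>{g. h g \<noteq> 0}. h g)"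
      using Q u(3) unfolding graded_submodule_def by blast
    define S where "S = {g. f g \<noteq> 0} \<union> {g. h g \<noteq> 0}"
    define F where "F g = f g + h g" for g
    have finS: "finite S" using f h S_def by simp
    have sub: "{g. F g \<noteq> 0} \<subseteq> S" by (auto simp: F_def S_def)
    have "(\<Sum>g\<in>{g. F g \<noteq> 0}. F g) = (\<Sum>g\<in>S. F g)"
      by (rule sum_supp_eq[symmetric]) (use sub finS in auto)
    also have "\<dots> = (\<Sum>g\<in>S. f g) + (\<Sum>g\<in>S. h g)" by (simp add: F_def sum.distrib)
    also have "\<dots> = p + q"
    proof -
      have "(\<Sum>g\<in>S. f g) = p" using f(3) sum_supp_eq[of S f] finS by (auto simp: S_def)
      moreover have "(\<Sum>g\<in>S. h g) = q" using h(3) sum_supp_eq[of S h] finS by (auto simp: S_def)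
      ultimately show ?thesis by simp
    qed
    finally have "u = (\<Sum>g\<in>{g. F g \<noteq> 0}. F g)" using u by simp
    moreover have "finite {g. F g \<noteq> 0}" using sub finS finite_subset by blast
    moreover have "F g \<in> set_plus P Q \<inter> Mg g" for g
      using f(2)[of g] h(2)[of g] addM by (auto simp: F_def set_plus_def)
    ultimately show "\<exists>f. finite {g. f g \<noteq> 0} \<and> (\<forall>g. f g \<in> set_plus P Q \<inter> Mg g) \<and> u = (\<Sum>g\<in>{g. f g \<noteq> 0}. f g)"
      by blast
  qed
qed

lemma ideal_one:
  assumes "module.subspace ((*) :: 'r::comm_ring_1 \<Rightarrow> 'r \<Rightarrow> 'r) P" "1 \<in> P"
  shows "P = UNIV"
proof -
  interpret module "(*) :: 'r \<Rightarrow> 'r \<Rightarrow> 'r" by (rule module_mult)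
  have "y * 1 \<in> P" for y using assms subspace_scale by blast
  then show ?thesis by auto
qed

lemma nil_in_J:
  fixes Rg :: "'g::group_add \<Rightarrow> 'r::comm_ring_1 set"
  assumes gr: "graded_ring Rg" and xh: "x \<in> homog Rg" and nil: "x ^ n = 0"
  shows "x \<in> J_gr (*) Rg"
  unfolding J_gr_def
proof
  fix P assume "P \<in> {U. gr_maximal (*) Rg U}"
  then have P: "graded_submodule (*) Rg P" "P \<noteq> UNIV"
    and max: "\<And>V. graded_submodule (*) Rg V \<Longrightarrow> P \<subseteq> V \<Longrightarrow> V = P \<or> V = UNIV"
    by (auto simp: gr_maximal_def)
  interpret module "(*) :: 'r \<Rightarrow> 'r \<Rightarrow> 'r" by (rule module_mult)
  have gm: "graded_module Rg (*) Rg" by (rule graded_ring_module[OF gr])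
  have sP: "subspace P" using P by (simp add: graded_submodule_def)
  show "x \<in> P"
  proof (rule ccontr)
    assume nx: "x \<notin> P"
    define V where "V = set_plus P (span {x})"
    obtain g where "x \<in> Rg g" using xh by (auto simp: homog_def)
    have gV: "graded_submodule (*) Rg V"
      unfolding V_def by (rule graded_sum[OF gm P(1) graded_cyclic[OF gm \<open>x \<in> Rg g\<close>]])
    have "P \<subseteq> V" unfolding V_def by (auto intro: set_plus_left)
    moreover have "x \<in> V" unfolding V_def by (intro set_plus_right[OF sP] span_base) auto
    ultimately have "V = UNIV" using max[OF gV] nx by auto
    then have "1 \<in> V" by simp
    then obtain p c where pc: "1 = p + c * x" "p \<in> P" by (auto simp: V_def set_plus_def span_singleton)
    have "(c * x) ^ n = 0" using nil by (simp add: power_mult_distrib)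
    then have "1 = (1 - c * x) * (\<Sum>i<n. (c * x) ^ i)" using one_diff_power_eq[of "c * x" n] by simp
    also have "1 - c * x = p" using pc by (simp add: algebra_simps)
    finally have "1 \<in> P" using subspace_scale[OF sP pc(2), of "\<Sum>i<n. (c * x) ^ i"] by (metis mult.commute)
    then show False using ideal_one[OF sP] P(2) by simp
  qed
qed


lemma ideal_sub_mult:
  assumes "module.subspace ((*) :: 'r::comm_ring_1 \<Rightarrow> 'r \<Rightarrow> 'r) C"
  shows "0 \<in> C" "\<And>x y. x \<in> C \<Longrightarrow> y \<in> C \<Longrightarrow> x + y \<in> C" "\<And>x y. x \<in> C \<Longrightarrow> y * x \<in> C"
    "\<And>x y. x \<in> C \<Longrightarrow> x * y \<in> C"
proof -
  interpret module "(*) :: 'r \<Rightarrow> 'r \<Rightarrow> 'r" by (rule module_mult)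
  show "0 \<in> C" using assms subspace_0 by blast
  show "\<And>x y. x \<in> C \<Longrightarrow> y \<in> C \<Longrightarrow> x + y \<in> C" using assms subspace_add by blast
  show "\<And>x y. x \<in> C \<Longrightarrow> y * x \<in> C" using assms subspace_scale by blast
  then show "\<And>x y. x \<in> C \<Longrightarrow> x * y \<in> C" by (metis mult.commute)
qed

lemma ideal_sum_mem:
  assumes "module.subspace ((*) :: 'r::comm_ring_1 \<Rightarrow> 'r \<Rightarrow> 'r) C" "\<And>i. i \<in> S \<Longrightarrow> f i \<in> C"
  shows "sum f S \<in> C"
proof -
  interpret module "(*) :: 'r \<Rightarrow> 'r \<Rightarrow> 'r" by (rule module_mult)
  show ?thesis using assms subspace_sum by blast
qed

lemma binom_ideal:
  fixes x y :: "'r::comm_ring_1"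
  assumes C: "module.subspace ((*) :: 'r \<Rightarrow> 'r \<Rightarrow> 'r) C" and "x ^ p \<in> C" "y ^ q \<in> C"
  shows "(x + y) ^ (p + q) \<in> C"
proof -
  note I = ideal_sub_mult[OF C]
  have "(x + y) ^ (p + q) = (\<Sum>k\<le>p + q. of_nat ((p + q) choose k) * x ^ k * y ^ (p + q - k))"
    by (rule binomial_ring)
  also have "\<dots> \<in> C"
  proof (rule ideal_sum_mem[OF C])
    fix k assume "k \<in> {..p + q}"
    show "of_nat ((p + q) choose k) * x ^ k * y ^ (p + q - k) \<in> C"
    proof (cases "p \<le> k")
      case True
      then have "x ^ k = x ^ p * x ^ (k - p)" by (metis le_add_diff_inverse power_add)
      then have "x ^ k \<in> C" using I(4)[OF assms(2)] by simp
      then show ?thesis using I by (simp add: mult.assoc)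
    next
      case False
      then have "p + q - k = q + (p - k)" by simp
      then have "y ^ (p + q - k) = y ^ q * y ^ (p - k)" by (simp add: power_add)
      then have "y ^ (p + q - k) \<in> C" using I(4)[OF assms(3)] by simp
      then show ?thesis using I by (simp add: mult.assoc)
    qed
  qed
  finally show ?thesis .
qed

lemma power_sum_ideal:
  fixes f :: "'b \<Rightarrow> 'r::comm_ring_1"
  assumes C: "module.subspace ((*) :: 'r \<Rightarrow> 'r \<Rightarrow> 'r) C" and "finite A" "\<And>b. b \<in> A \<Longrightarrow> f b ^ 2 \<in> C"
  shows "\<exists>N. (\<Sum>b\<in>A. f b) ^ N \<in> C"
  using assms(2,3)
proof (induction A rule: finite_induct)
  case empty
  then show ?case using ideal_sub_mult(1)[OF C] by (intro exI[of _ 1]) simp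
next
  case (insert y A)
  then obtain N where "(\<Sum>b\<in>A. f b) ^ N \<in> C" by auto
  moreover have "f y ^ 2 \<in> C" using insert by auto
  ultimately have "(f y + (\<Sum>b\<in>A. f b)) ^ (2 + N) \<in> C" using binom_ideal[OF C] by blast
  then show ?case using insert(1,2) by (metis sum.insert)
qed

definition pform :: "'r::comm_ring_1 \<Rightarrow> 'r set \<Rightarrow> 'r \<Rightarrow> bool" where
  "pform c T z \<longleftrightarrow> (\<exists>N t. t \<in> T \<and> z = c ^ N - t)"

lemma pform_mult:
  assumes C: "module.subspace ((*) :: 'r::comm_ring_1 \<Rightarrow> 'r \<Rightarrow> 'r) T" and "pform c T x" "pform c T y"
  shows "pform c T (x * y)"
proof -
  note I = ideal_sub_mult[OF C]
  obtain a t1 b t2 where "t1 \<in> T" "x = c ^ a - t1" "t2 \<in> T" "y = c ^ b - t2"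
    using assms by (auto simp: pform_def)
  moreover have "(c ^ a - t1) * (c ^ b - t2) = c ^ (a + b) - (t1 * c ^ b + c ^ a * t2 - t1 * t2)"
    by (simp add: algebra_simps power_add)
  moreover have "t1 * c ^ b + c ^ a * t2 - t1 * t2 \<in> T"
    using I calculation by (metis diff_conv_add_uminus mult_minus_left)
  ultimately show ?thesis by (auto simp: pform_def)
qed

lemma pform_power:
  assumes C: "module.subspace ((*) :: 'r::comm_ring_1 \<Rightarrow> 'r \<Rightarrow> 'r) T" and "pform c T x"
  shows "pform c T (x ^ n)"
proof (induction n)
  case 0
  then show ?case using ideal_sub_mult(1)[OF C] by (auto simp: pform_def intro!: exI[of _ 0])
next
  case (Suc n)
  then show ?case using pform_mult[OF C assms(2)] by simp
qed

lemma pform_diff: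
  assumes C: "module.subspace ((*) :: 'r::comm_ring_1 \<Rightarrow> 'r \<Rightarrow> 'r) T" and "pform c T x" "t \<in> T"
  shows "pform c T (x - t)"
proof -
  obtain N t0 where "t0 \<in> T" "x = c ^ N - t0" using assms by (auto simp: pform_def)
  moreover have "t0 + t \<in> T" using ideal_sub_mult(2)[OF C] calculation assms by blast
  ultimately show ?thesis unfolding pform_def by (intro exI[of _ N] exI[of _ "t0 + t"]) simp
qed

context module begin

definition TS :: "'a set \<Rightarrow> 'b set \<Rightarrow> 'b set" where
  "TS T A = {u. \<exists>f. (\<forall>z\<in>A. f z \<in> T) \<and> u = (\<Sum>z\<in>A. f z *s z)}"

lemma TS_subspace:
  assumes C: "module.subspace ((*) :: 'a \<Rightarrow> 'a \<Rightarrow> 'a) T"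
  shows "subspace (TS T A)"
  unfolding subspace_def
proof (intro conjI allI ballI)
  note I = ideal_sub_mult[OF C]
  show "0 \<in> TS T A" unfolding TS_def using I(1) by (auto intro!: exI[of _ "\<lambda>_. 0"])
  fix x y assume "x \<in> TS T A" "y \<in> TS T A"
  then obtain f g where "\<forall>z\<in>A. f z \<in> T" "x = (\<Sum>z\<in>A. f z *s z)" "\<forall>z\<in>A. g z \<in> T" "y = (\<Sum>z\<in>A. g z *s z)"
    by (auto simp: TS_def)
  then show "x + y \<in> TS T A" unfolding TS_def using I(2)
    by (auto intro!: exI[of _ "\<lambda>z. f z + g z"] simp: sum.distrib scale_left_distrib)
next
  note I = ideal_sub_mult[OF C]
  fix c x assume "x \<in> TS T A"
  then obtain f where "\<forall>z\<in>A. f z \<in> T" "x = (\<Sum>z\<in>A. f z *s z)" by (auto simp: TS_def)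
  then show "c *s x \<in> TS T A" unfolding TS_def using I(3)
    by (auto intro!: exI[of _ "\<lambda>z. c * f z"] simp: scale_sum_right)
qed

lemma TS_insert:
  assumes "finite A" "y \<notin> A" "u \<in> TS T (insert y A)"
  shows "\<exists>\<tau> w. \<tau> \<in> T \<and> w \<in> TS T A \<and> u = \<tau> *s y + w"
proof -
  obtain f where "\<forall>z\<in>insert y A. f z \<in> T" "u = (\<Sum>z\<in>insert y A. f z *s z)"
    using assms by (auto simp: TS_def)
  then show ?thesis using assms(1,2) by (auto simp: TS_def)
qed

lemma TS_kill:
  assumes "\<And>z. z \<in> A \<Longrightarrow> e *s z = 0" "w \<in> TS T A"
  shows "e *s w = 0"
proof -
  obtain f where "w = (\<Sum>z\<in>A. f z *s z)" using assms(2) by (auto simp: TS_def)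
  then have "e *s w = (\<Sum>z\<in>A. f z *s (e *s z))" by (simp add: scale_sum_right mult.commute)
  also have "\<dots> = 0" using assms(1) by simp
  finally show ?thesis .
qed

lemma nakayama_gen:
  assumes C: "module.subspace ((*) :: 'a \<Rightarrow> 'a \<Rightarrow> 'a) T" and "finite A"
  shows "(\<forall>x\<in>A. c *s x \<in> TS T A) \<Longrightarrow> \<exists>e. pform c T e \<and> (\<forall>x\<in>A. e *s x = 0)"
  using assms(2)
proof (induction A arbitrary: c rule: finite_induct)
  case empty
  then show ?case by (auto simp: pform_def intro!: exI[of _ 1] exI[of _ 0] ideal_sub_mult(1)[OF C])
next
  case (insert y A)
  note I = ideal_sub_mult[OF C]
  note TSs = TS_subspace[OF C]
  obtain \<tau> wy where tw: "\<tau> \<in> T" "wy \<in> TS T A" "c *s y = \<tau> *s y + wy"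
    using TS_insert[OF insert(1,2)] insert(4) by blast
  define d where "d = c - \<tau>"
  have dy: "d *s y = wy" using tw(3) by (simp add: d_def scale_left_diff_distrib)
  have "(d * c) *s x \<in> TS T A" if xA: "x \<in> A" for x
  proof -
    obtain \<sigma> wx where sw: "\<sigma> \<in> T" "wx \<in> TS T A" "c *s x = \<sigma> *s y + wx"
    proof -
      have "c *s x \<in> TS T (insert y A)" using insert(4) xA by blast
      then show ?thesis using TS_insert[OF insert(1,2)] that by blast
    qed
    have e1: "(d * c) *s x = d *s (c *s x)" by simp
    have e2: "d *s (c *s x) = d *s (\<sigma> *s y) + d *s wx" by (simp only: sw(3) scale_right_distrib)
    have e3: "d *s (\<sigma> *s y) = \<sigma> *s (d *s y)" by (rule scale_left_commute)
    have eq: "(d * c) *s x = \<sigma> *s wy + d *s wx" using e1 e2 e3 dy by simp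
    have "\<sigma> *s wy \<in> TS T A" by (rule subspace_scale[OF TSs tw(2)])
    moreover have "d *s wx \<in> TS T A" by (rule subspace_scale[OF TSs sw(2)])
    ultimately show ?thesis unfolding eq by (rule subspace_add[OF TSs])
  qed
  then obtain e where e: "pform (d * c) T e" "\<forall>x\<in>A. e *s x = 0" using insert(3) by blast
  have pd: "pform c T d" unfolding pform_def d_def using tw(1) by (intro exI[of _ 1] exI[of _ \<tau>]) simp
  have pc: "pform c T c" unfolding pform_def using I(1) by (intro exI[of _ 1] exI[of _ 0]) simp
  have "pform c T (d * c)" by (rule pform_mult[OF C pd pc])
  have pe: "pform c T e"
  proof -
    obtain N t where "t \<in> T" "e = (d * c) ^ N - t" using e(1) by (auto simp: pform_def)
    then show ?thesis using pform_diff[OF C pform_power[OF C \<open>pform c T (d * c)\<close>]] by simp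
  qed
  have "(e * d) *s y = e *s (d *s y)" by simp
  also have "\<dots> = 0" using TS_kill[OF _ tw(2), of e] e(2) by (simp add: dy)
  finally have "(e * d) *s y = 0" .
  moreover have "(e * d) *s x = 0" if "x \<in> A" for x
  proof -
    have "(e * d) *s x = d *s (e *s x)" by (simp add: mult.commute)
    then show ?thesis using e(2) that by simp
  qed
  ultimately show ?case using pform_mult[OF C pe pd] by blast
qed

end


lemma ideal_subspaceI:
  assumes "0 \<in> T" "\<And>x y. x \<in> T \<Longrightarrow> y \<in> T \<Longrightarrow> x + y \<in> T" "\<And>c x. x \<in> T \<Longrightarrow> c * x \<in> T"
  shows "module.subspace ((*) :: 'r::comm_ring_1 \<Rightarrow> 'r \<Rightarrow> 'r) T"
  using assms by (simp add: module.subspace_def[OF module_mult])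

lemma faithful_eq:
  assumes "faithful sc" "module sc" "\<And>m. sc x m = sc y m"
  shows "x = y"
proof -
  interpret module sc by (rule assms(2))
  have "\<forall>m. sc (x - y) m = 0" using assms(3) by (simp add: scale_left_diff_distrib)
  then have "x - y = 0" using assms(1) unfolding faithful_def by blast
  then show ?thesis by simp
qed

context module begin

lemma unit_partition:
  assumes faith: "faithful scale" and fin: "finite A" and spanA: "span A = UNIV"
    and K: "\<And>b. b \<in> A \<Longrightarrow> module.subspace ((*) :: 'a \<Rightarrow> 'a \<Rightarrow> 'a) (K b) \<and> span {b} = ideal_times_module scale (K b)"
  shows "\<exists>t. (\<forall>b\<in>A. t b \<in> K b) \<and> (\<Sum>b\<in>A. t b) = 1"
proof -
  have Kid: "\<And>b. b \<in> A \<Longrightarrow> module.subspace ((*) :: 'a \<Rightarrow> 'a \<Rightarrow> 'a) (K b)" using K by blast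
  define T where "T = {u. \<exists>t. (\<forall>b\<in>A. t b \<in> K b) \<and> u = (\<Sum>b\<in>A. t b)}"
  have Tid: "module.subspace ((*) :: 'a \<Rightarrow> 'a \<Rightarrow> 'a) T"
  proof (rule ideal_subspaceI)
    show "0 \<in> T" unfolding T_def using ideal_sub_mult(1)[OF Kid] by (intro CollectI exI[of _ "\<lambda>_. 0"]) simp
  next
    fix x y assume "x \<in> T" "y \<in> T"
    then obtain t t' where "\<forall>b\<in>A. t b \<in> K b" "x = (\<Sum>b\<in>A. t b)" "\<forall>b\<in>A. t' b \<in> K b" "y = (\<Sum>b\<in>A. t' b)"
      by (auto simp: T_def)
    then show "x + y \<in> T" unfolding T_def using ideal_sub_mult(2)[OF Kid]
      by (intro CollectI exI[of _ "\<lambda>b. t b + t' b"]) (simp add: sum.distrib)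
  next
    fix c x assume "x \<in> T"
    then obtain t where "\<forall>b\<in>A. t b \<in> K b" "x = (\<Sum>b\<in>A. t b)" by (auto simp: T_def)
    then show "c * x \<in> T" unfolding T_def using ideal_sub_mult(3)[OF Kid]
      by (intro CollectI exI[of _ "\<lambda>b. c * t b"]) (simp add: sum_distrib_left)
  qed
  have KT: "k \<in> T" if "x \<in> A" "k \<in> K x" for x k
  proof -
    have "\<forall>b\<in>A. (if b = x then k else 0) \<in> K b" using that ideal_sub_mult(1)[OF Kid] by auto
    moreover have "k = (\<Sum>b\<in>A. if b = x then k else 0)" using that fin by simp
    ultimately show ?thesis unfolding T_def
      by (intro CollectI exI[of _ "\<lambda>b. if b = x then k else 0"]) simp
  qed
  have TSs: "subspace (TS T A)" by (rule TS_subspace[OF Tid])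
  have hyp: "\<forall>x\<in>A. 1 *s x \<in> TS T A"
  proof
    fix x assume xA: "x \<in> A"
    have "x \<in> span {x}" by (rule span_base) simp
    then have "x \<in> ideal_times_module scale (K x)" using K[OF xA] by simp
    moreover have "ideal_times_module scale (K x) \<subseteq> TS T A"
      unfolding ideal_times_module_def
    proof (rule span_minimal[OF _ TSs])
      show "{k *s m |k m. k \<in> K x} \<subseteq> TS T A"
      proof safe
        fix k m assume k: "k \<in> K x"
        have "m \<in> span A" using spanA by simp
        then obtain u where "m = (\<Sum>v\<in>A. u v *s v)" using span_finite[OF fin] by auto
        then have "k *s m = (\<Sum>v\<in>A. (k * u v) *s v)" by (simp add: scale_sum_right)
        moreover have "\<forall>v\<in>A. k * u v \<in> T" using KT[OF xA] ideal_sub_mult(4)[OF Kid[OF xA] k] by blast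
        ultimately show "k *s m \<in> TS T A" unfolding TS_def
          by (intro CollectI exI[of _ "\<lambda>v. k * u v"]) simp
      qed
    qed
    ultimately show "1 *s x \<in> TS T A" by auto
  qed
  obtain e where e: "pform 1 T e" "\<forall>x\<in>A. e *s x = 0"
    using nakayama_gen[OF Tid fin hyp] by blast
  obtain N t where t: "t \<in> T" "e = 1 ^ N - t" using e(1) by (auto simp: pform_def)
  have "e *s m = 0" for m
  proof -
    have "m \<in> span A" using spanA by simp
    then obtain u where "m = (\<Sum>v\<in>A. u v *s v)" using span_finite[OF fin] by auto
    then have "e *s m = (\<Sum>v\<in>A. u v *s (e *s v))" by (simp add: scale_sum_right mult.commute)
    then show ?thesis using e(2) by simp
  qed
  then have "e = 0" using faith by (simp add: faithful_def)
  then have "t = 1" using t by simp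
  then show ?thesis using t(1) unfolding T_def by auto
qed

lemma cancellation:
  assumes faith: "faithful scale" and fin: "finite A" and spanA: "span A = UNIV"
    and K: "\<And>b. b \<in> A \<Longrightarrow> module.subspace ((*) :: 'a \<Rightarrow> 'a \<Rightarrow> 'a) (K b) \<and> span {b} = ideal_times_module scale (K b)"
    and L: "module.subspace ((*) :: 'a \<Rightarrow> 'a \<Rightarrow> 'a) L"
    and a: "\<And>m. a *s m \<in> ideal_times_module scale L"
  shows "a \<in> L"
proof -
  note IL = ideal_sub_mult[OF L]
  have mod: "module scale" by unfold_locales
  obtain t where t: "\<forall>b\<in>A. t b \<in> K b" "(\<Sum>b\<in>A. t b) = 1"
    using unit_partition[OF faith fin spanA K] by blast
  have key: "a * t1 * t2 \<in> L" if bA: "b \<in> A" and t1: "t1 \<in> K b" and t2: "t2 \<in> K b" for b t1 t2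
  proof -
    have cyc: "\<exists>c. t *s m = c *s b" if "t \<in> K b" for t m
    proof -
      have "t *s m \<in> ideal_times_module scale (K b)" by (rule itm_base[OF that])
      then show ?thesis using K[OF bA] by (auto simp: span_singleton)
    qed
    have claim: "\<exists>\<kappa>\<in>L. t1 *s v = \<kappa> *s b" if "v \<in> ideal_times_module scale L" for v
      using that unfolding ideal_times_module_def
    proof (induction rule: span_induct)
      case (step x)
      then obtain k m where km: "x = k *s m" "k \<in> L" by auto
      obtain c where "t1 *s m = c *s b" using cyc[OF t1] by blast
      have "t1 *s x = k *s (t1 *s m)" using km by (simp add: mult.commute)
      then have "t1 *s x = (k * c) *s b" using \<open>t1 *s m = c *s b\<close> by simp
      then show ?case using IL(4)[OF km(2)] by blast
    next
      case base
      show ?case unfolding subspace_def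
      proof (intro conjI ballI allI)
        show "0 \<in> Collect (\<lambda>v. \<exists>\<kappa>\<in>L. t1 *s v = \<kappa> *s b)" using IL(1) by force
      next
        fix x y assume "x \<in> Collect (\<lambda>v. \<exists>\<kappa>\<in>L. t1 *s v = \<kappa> *s b)" "y \<in> Collect (\<lambda>v. \<exists>\<kappa>\<in>L. t1 *s v = \<kappa> *s b)"
        then obtain k1 k2 where "k1 \<in> L" "t1 *s x = k1 *s b" "k2 \<in> L" "t1 *s y = k2 *s b" by auto
        then have "k1 + k2 \<in> L" "t1 *s (x + y) = (k1 + k2) *s b" using IL(2) by (auto simp: scale_right_distrib scale_left_distrib)
        then show "x + y \<in> Collect (\<lambda>v. \<exists>\<kappa>\<in>L. t1 *s v = \<kappa> *s b)" by blast
      next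
        fix c x assume "x \<in> Collect (\<lambda>v. \<exists>\<kappa>\<in>L. t1 *s v = \<kappa> *s b)"
        then obtain k1 where "k1 \<in> L" "t1 *s x = k1 *s b" by auto
        moreover have "t1 *s (c *s x) = c *s (t1 *s x)" by (simp add: mult.commute)
        ultimately have "c * k1 \<in> L" "t1 *s (c *s x) = (c * k1) *s b" using IL(3) by auto
        then show "c *s x \<in> Collect (\<lambda>v. \<exists>\<kappa>\<in>L. t1 *s v = \<kappa> *s b)" by blast
      qed
    qed
    obtain \<kappa> where \<kappa>: "\<kappa> \<in> L" "t1 *s (a *s b) = \<kappa> *s b" using claim[OF a] by blast
    have "(a * t1 * t2) *s m = (\<kappa> * t2) *s m" for m
    proof -
      obtain c' where c': "t2 *s m = c' *s b" using cyc[OF t2] by blast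
      have "(a * t1 * t2) *s m = (a * t1) *s (t2 *s m)" by simp
      also have "\<dots> = c' *s (t1 *s (a *s b))" by (simp add: c' mult.commute mult.left_commute)
      also have "\<dots> = c' *s (\<kappa> *s b)" by (simp only: \<kappa>(2))
      also have "\<dots> = \<kappa> *s (t2 *s m)" by (simp add: c' mult.commute)
      also have "\<dots> = (\<kappa> * t2) *s m" by simp
      finally show ?thesis .
    qed
    then have "a * t1 * t2 = \<kappa> * t2" by (rule faithful_eq[OF faith mod])
    then show ?thesis using IL(4)[OF \<kappa>(1)] by simp
  qed
  define C where "C = {x. a * x \<in> L}"
  have Cid: "module.subspace ((*) :: 'a \<Rightarrow> 'a \<Rightarrow> 'a) C"
  proof (rule ideal_subspaceI)
    show "0 \<in> C" using IL(1) by (simp add: C_def)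
    show "x + y \<in> C" if "x \<in> C" "y \<in> C" for x y using that IL(2) by (simp add: C_def distrib_left)
    show "c * x \<in> C" if "x \<in> C" for c x using that IL(3)[of "a * x" c] by (simp add: C_def mult.left_commute)
  qed
  have "t b ^ 2 \<in> C" if "b \<in> A" for b
    using key[OF that t(1)[rule_format, OF that] t(1)[rule_format, OF that]]
    by (simp add: C_def power2_eq_square mult.assoc)
  then obtain N where "(\<Sum>b\<in>A. t b) ^ N \<in> C" using power_sum_ideal[OF Cid fin] by blast
  then show ?thesis using t(2) by (simp add: C_def)
qed

end


lemma itm_mono:
  assumes "module sc" "K \<subseteq> L" shows "ideal_times_module sc K \<subseteq> ideal_times_module sc L"
proof -
  interpret module sc by (rule assms(1))
  show ?thesis unfolding ideal_times_module_def by (rule span_mono) (use assms(2) in blast)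
qed

theorem mainTheorem17:
  fixes Rg :: "'g::group_add \<Rightarrow> 'r::comm_ring_1 set"
    and sc :: "'r \<Rightarrow> 'm::ab_group_add \<Rightarrow> 'm"
    and Mg :: "'g \<Rightarrow> 'm set"
    and U :: "'m set"
  assumes "graded_module Rg sc Mg"
    and "graded_fin_gen sc Mg"
    and "faithful sc"
    and "graded_multiplication Rg sc Mg"
    and "graded_submodule sc Mg U" and "U \<noteq> UNIV"
    and "J_gr sc Mg = ideal_times_module sc (J_gr (*) Rg)"
  shows "(gr_weakly_J_semiprime Rg sc Mg U \<longleftrightarrow> gr_weakly_J_semiprime_ideal Rg (colon sc U))
       \<and> (gr_weakly_J_semiprime_ideal Rg (colon sc U) \<longleftrightarrow>
            (\<exists>L. gr_weakly_J_semiprime_ideal Rg L \<and> U = ideal_times_module sc L))"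
proof -
  note gm = assms(1) and fg = assms(2) and faith = assms(3) and gmult = assms(4)
    and gU = assms(5) and UU = assms(6) and JMeq = assms(7)
  interpret module sc using gm by (rule graded_module_module)
  have modsc: "module sc" by unfold_locales
  interpret R: module "(*) :: 'r \<Rightarrow> 'r \<Rightarrow> 'r" by (rule module_mult)
  have gr: "graded_ring Rg" using gm by (simp add: graded_module_def)
  have mulR: "\<And>g h a b. a \<in> Rg g \<Longrightarrow> b \<in> Rg h \<Longrightarrow> a * b \<in> Rg (g + h)"
    using gr by (auto simp: graded_ring_def)
  have mulM: "\<And>g h a m. a \<in> Rg g \<Longrightarrow> m \<in> Mg h \<Longrightarrow> sc a m \<in> Mg (g + h)"
    using gm by (auto simp: graded_module_def)
  have hR: "r * s \<in> homog Rg" if "r \<in> homog Rg" "s \<in> homog Rg" for r s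
    using that mulR unfolding homog_def by blast
  have hM: "sc r m \<in> homog Mg" if "r \<in> homog Rg" "m \<in> homog Mg" for r m
    using that mulM unfolding homog_def by blast
  obtain A where A: "finite A" "A \<subseteq> homog Mg" "span A = UNIV"
    using fg by (auto simp: graded_fin_gen_def)
  have subK: "module.subspace ((*) :: 'r \<Rightarrow> 'r \<Rightarrow> 'r) K" if "graded_ideal Rg K" for K
    using that by (simp add: graded_ideal_def graded_submodule_def)
  have cycK: "\<exists>K. graded_ideal Rg K \<and> span {m} = ideal_times_module sc K" if mhom: "m \<in> homog Mg" for m
  proof -
    obtain h where "m \<in> Mg h" using mhom by (auto simp: homog_def)
    then have "graded_submodule sc Mg (span {m})" by (rule graded_cyclic[OF gm])
    then show ?thesis using gmult by (simp add: graded_multiplication_def)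
  qed
  have "\<forall>b\<in>A. \<exists>K. module.subspace ((*) :: 'r \<Rightarrow> 'r \<Rightarrow> 'r) K \<and> span {b} = ideal_times_module sc K"
    using cycK A(2) subK by blast
  then obtain Kf where Kf: "\<And>b. b \<in> A \<Longrightarrow> module.subspace ((*) :: 'r \<Rightarrow> 'r \<Rightarrow> 'r) (Kf b) \<and> span {b} = ideal_times_module sc (Kf b)"
    by metis
  have CANC: "a \<in> L" if "module.subspace ((*) :: 'r \<Rightarrow> 'r \<Rightarrow> 'r) L" "\<And>m. sc a m \<in> ideal_times_module sc L" for a L
    by (rule cancellation[OF faith A(1) A(3) Kf that])
  define I where "I = colon sc U"
  define J where "J = J_gr ((*) :: 'r \<Rightarrow> 'r \<Rightarrow> 'r) Rg"
  define JM where "JM = J_gr sc Mg"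
  have JM: "JM = ideal_times_module sc J" using JMeq by (simp add: JM_def J_def)
  have sU: "subspace U" using gU by (simp add: graded_submodule_def)
  have Jsub: "R.subspace J" unfolding J_def J_gr_def
    by (rule R.subspace_Inter) (auto simp: gr_maximal_def graded_submodule_def)
  have JMsub: "subspace JM" unfolding JM by (rule itm_subspace)
  define SP where "SP = set_plus U JM"
  have SPsub: "subspace SP" unfolding SP_def by (rule subspace_set_plus[OF sU JMsub])
  have JSP: "sc j m \<in> SP" if "j \<in> J" for j m
    unfolding SP_def using set_plus_right[OF sU] itm_base[OF that] JM by auto
  have nilJ: "x \<in> J" if "x \<in> homog Rg" "x ^ n = 0" for x n
    unfolding J_def by (rule nil_in_J[OF gr that])
  obtain K0 where K0: "graded_ideal Rg K0" "U = ideal_times_module sc K0"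
    using gmult gU by (auto simp: graded_multiplication_def)
  have "I = K0"
  proof
    show "K0 \<subseteq> I" unfolding I_def colon_def using K0(2) itm_base by blast
    show "I \<subseteq> K0"
    proof
      fix a assume "a \<in> I"
      then have "sc a m \<in> ideal_times_module sc K0" for m using K0(2) by (simp add: I_def colon_def)
      then show "a \<in> K0" using CANC[OF subK[OF K0(1)]] by blast
    qed
  qed
  then have gI: "graded_ideal Rg I" and UI: "U = ideal_times_module sc I" using K0 by auto
  have Isub: "R.subspace I" using subK[OF gI] .
  have IU: "sc i m \<in> U" if "i \<in> I" for i m using that by (simp add: I_def colon_def)
  have Iprop: "I \<noteq> UNIV"
  proof
    assume "I = UNIV"
    then have "sc 1 m \<in> U" for m using IU by blast
    then show False using UU by auto
  qed
  have key: "sc r m \<in> SP" if mh: "m \<in> homog Mg" and gK: "graded_ideal Rg K" and mK: "span {m} = ideal_times_module sc K"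
    and hk: "\<And>k m'. k \<in> K \<Longrightarrow> k \<in> homog Rg \<Longrightarrow> sc (r * k) m' \<in> SP" for r m K
  proof -
    have "m \<in> ideal_times_module sc K" using mK span_base by blast
    then show ?thesis unfolding ideal_times_module_def
    proof (induction rule: span_induct)
      case base
      show ?case unfolding subspace_def
      proof (intro conjI allI ballI)
        show "0 \<in> {x. sc r x \<in> SP}" using subspace_0[OF SPsub] by simp
        show "x + y \<in> {x. sc r x \<in> SP}" if "x \<in> {x. sc r x \<in> SP}" "y \<in> {x. sc r x \<in> SP}" for x y
          using that subspace_add[OF SPsub] by (simp add: scale_right_distrib)
        show "sc c x \<in> {x. sc r x \<in> SP}" if "x \<in> {x. sc r x \<in> SP}" for c x
        proof -
          have "sc r (sc c x) = sc c (sc r x)" by (rule scale_left_commute)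
          moreover have "sc c (sc r x) \<in> SP" using that subspace_scale[OF SPsub] by blast
          ultimately show ?thesis by (simp only: mem_Collect_eq)
        qed
      qed
    next
      case (step x)
      then obtain k m' where km: "x = sc k m'" "k \<in> K" by auto
      obtain f where f: "finite {g. f g \<noteq> 0}" "\<And>g. f g \<in> K \<inter> Rg g" "k = (\<Sum>g\<in>{g. f g \<noteq> 0}. f g)"
        using gK km(2) unfolding graded_ideal_def graded_submodule_def by blast
      have "sc r x = (\<Sum>g\<in>{g. f g \<noteq> 0}. sc (r * f g) m')"
        using km(1) f(3) by (simp add: scale_sum_left scale_sum_right)
      also have "\<dots> \<in> SP"
      proof (rule subspace_sum[OF SPsub])
        fix g show "sc (r * f g) m' \<in> SP" using hk f(2)[of g] by (auto simp: homog_def)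
      qed
      finally show ?case by simp
    qed
  qed
  have coef: "\<exists>c. sc k m' = sc c m" if "span {m} = ideal_times_module sc K" "k \<in> K" for m K k m'
  proof -
    have "sc k m' \<in> span {m}" using that itm_base by auto
    then show ?thesis by (auto simp: span_singleton)
  qed
  have NIL: "sc t m \<in> SP" if th: "t \<in> homog Rg" and mh: "m \<in> homog Mg" and n: "n \<ge> 1" and z: "sc (t ^ n) m = 0" for t m n
  proof -
    obtain K where K: "graded_ideal Rg K" "span {m} = ideal_times_module sc K" using cycK[OF mh] by blast
    show ?thesis
    proof (rule key[OF mh K])
      fix k m' assume k: "k \<in> K" "k \<in> homog Rg"
      have "sc (t ^ n * k) m'' = 0" for m''
      proof -
        obtain c where ceq: "sc k m'' = sc c m" using coef[OF K(2) k(1)] by blast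
        have "sc (t ^ n * k) m'' = sc (t ^ n) (sc k m'')" by simp
        also have "\<dots> = sc (t ^ n) (sc c m)" by (simp only: ceq)
        also have "\<dots> = sc c (sc (t ^ n) m)" by (rule scale_left_commute)
        finally have "sc (t ^ n * k) m'' = sc c (sc (t ^ n) m)" .
        then show ?thesis using z by simp
      qed
      then have "t ^ n * k = 0" using faith by (simp add: faithful_def)
      then have "(t * k) ^ n = 0"
        using n by (metis (no_types) mult.commute mult_zero_left power_mult_distrib power_eq_if
            mult.left_commute not_one_le_zero) 
      then have "t * k \<in> J" using nilJ hR[OF th k(2)] by blast
      then show "sc (t * k) m' \<in> SP" by (rule JSP)
    qed
  qed
  have ii_i: "gr_weakly_J_semiprime Rg sc Mg U" if ii: "gr_weakly_J_semiprime_ideal Rg I"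
    unfolding gr_weakly_J_semiprime_def
  proof (intro conjI ballI allI impI)
    show "graded_submodule sc Mg U" by (rule gU)
    show "U \<noteq> UNIV" by (rule UU)
    fix r m and n :: nat assume rh: "r \<in> homog Rg" and mh: "m \<in> homog Mg" and n: "n \<ge> 1"
      and "sc (r ^ n) m \<noteq> 0" and rnm: "sc (r ^ n) m \<in> U"
    obtain K where K: "graded_ideal Rg K" "span {m} = ideal_times_module sc K" using cycK[OF mh] by blast
    have "sc r m \<in> SP"
    proof (rule key[OF mh K])
      fix k m' assume k: "k \<in> K" "k \<in> homog Rg"
      have rnk: "r ^ n * k \<in> I" unfolding I_def colon_def
      proof (intro CollectI allI)
        fix m''
        obtain c where ceq: "sc k m'' = sc c m" using coef[OF K(2) k(1)] by blast
        have "sc (r ^ n * k) m'' = sc (r ^ n) (sc k m'')" by simp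
        also have "\<dots> = sc (r ^ n) (sc c m)" by (simp only: ceq)
        also have "\<dots> = sc c (sc (r ^ n) m)" by (rule scale_left_commute)
        finally have "sc (r ^ n * k) m'' = sc c (sc (r ^ n) m)" .
        moreover have "sc c (sc (r ^ n) m) \<in> U" using rnm subspace_scale[OF sU] by blast
        ultimately show "sc (r ^ n * k) m'' \<in> U" by (simp only:)
      qed
      show "sc (r * k) m' \<in> SP"
      proof (cases "r ^ n * k = 0")
        case True
        then have "(r * k) ^ n = 0"
          using n by (metis (no_types) mult.commute mult_zero_left power_mult_distrib power_eq_if
            mult.left_commute not_one_le_zero)
        then have "r * k \<in> J" using nilJ hR[OF rh k(2)] by blast
        then show ?thesis by (rule JSP)
      next
        case False
        have "r * k \<in> set_plus I J"
          using ii rh k(2) n False rnk unfolding gr_weakly_J_semiprime_ideal_def gr_weakly_J_semiprime_def J_def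
          by blast
        then obtain i j where ij: "r * k = i + j" "i \<in> I" "j \<in> J" by (auto simp: set_plus_def)
        have "sc (r * k) m' = sc i m' + sc j m'" by (simp add: ij(1) scale_left_distrib)
        moreover have "sc i m' \<in> U" "sc j m' \<in> JM" using IU[OF ij(2)] itm_base[OF ij(3)] JM by auto
        ultimately show ?thesis unfolding SP_def set_plus_def by blast
      qed
    qed
    then show "sc r m \<in> set_plus U (J_gr sc Mg)" by (simp add: SP_def JM_def)
  qed
  have i_ii: "gr_weakly_J_semiprime_ideal Rg I" if i: "gr_weakly_J_semiprime Rg sc Mg U"
    unfolding gr_weakly_J_semiprime_ideal_def gr_weakly_J_semiprime_def
  proof (intro conjI ballI allI impI)
    show "graded_submodule (*) Rg I" using gI by (simp add: graded_ideal_def)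
    show "I \<noteq> UNIV" by (rule Iprop)
    fix r s and n :: nat assume rh: "r \<in> homog Rg" and sh: "s \<in> homog Rg" and n: "n \<ge> 1"
      and nz: "r ^ n * s \<noteq> 0" and rns: "r ^ n * s \<in> I"
    have IJsub: "R.subspace (set_plus I J)" by (rule R.subspace_set_plus[OF Isub Jsub])
    have SPsub2: "SP \<subseteq> ideal_times_module sc (set_plus I J)"
    proof
      fix x assume "x \<in> SP"
      then obtain u w where uw: "x = u + w" "u \<in> U" "w \<in> JM" by (auto simp: SP_def set_plus_def)
      have "I \<subseteq> set_plus I J" using R.set_plus_left[OF Jsub] by blast
      then have "u \<in> ideal_times_module sc (set_plus I J)" using uw(2) UI itm_mono[OF modsc] by blast
      moreover have "J \<subseteq> set_plus I J" using R.set_plus_right[OF Isub] by blast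
      then have "w \<in> ideal_times_module sc (set_plus I J)" using uw(3) JM itm_mono[OF modsc] by blast
      ultimately show "x \<in> ideal_times_module sc (set_plus I J)"
        using uw(1) subspace_add[OF itm_subspace] by blast
    qed
    have gen: "sc (r * s) b \<in> SP" if bA: "b \<in> A" for b
    proof -
      have bh: "b \<in> homog Mg" using A(2) bA by blast
      show ?thesis
      proof (cases "sc (r ^ n * s) b = 0")
        case True
        have "(r * s) ^ n = s ^ (n - 1) * (r ^ n * s)"
          using n by (metis (no_types) mult.commute mult.left_commute power_mult_distrib power_eq_if not_one_le_zero)
        then have "sc ((r * s) ^ n) b = sc (s ^ (n - 1) * (r ^ n * s)) b" by (rule arg_cong)
        also have "\<dots> = sc (s ^ (n - 1)) (sc (r ^ n * s) b)" by (rule scale_scale[symmetric])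
        also have "\<dots> = 0" using True by simp
        finally have "sc ((r * s) ^ n) b = 0" .
        then show ?thesis using NIL[OF hR[OF rh sh] bh n] by blast
      next
        case False
        have "sc (r ^ n) (sc s b) = sc (r ^ n * s) b" by simp
        moreover have "sc (r ^ n * s) b \<in> U" using IU[OF rns] .
        ultimately have "sc r (sc s b) \<in> set_plus U (J_gr sc Mg)"
          using i hM[OF sh bh] rh n False unfolding gr_weakly_J_semiprime_def by metis
        then show ?thesis by (simp add: SP_def JM_def)
      qed
    qed
    have "sc (r * s) m \<in> SP" for m
    proof -
      have "m \<in> span A" using A(3) by simp
      then show ?thesis
      proof (induction rule: span_induct)
        case base
        show ?case unfolding subspace_def
        proof (intro conjI allI ballI)
          show "0 \<in> {x. sc (r * s) x \<in> SP}" using subspace_0[OF SPsub] by simp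
          show "x + y \<in> {x. sc (r * s) x \<in> SP}" if "x \<in> {x. sc (r * s) x \<in> SP}" "y \<in> {x. sc (r * s) x \<in> SP}" for x y
            using that subspace_add[OF SPsub] by (simp add: scale_right_distrib)
          show "sc c x \<in> {x. sc (r * s) x \<in> SP}" if "x \<in> {x. sc (r * s) x \<in> SP}" for c x
          proof -
            have "sc (r * s) (sc c x) = sc c (sc (r * s) x)" by (rule scale_left_commute)
            moreover have "sc c (sc (r * s) x) \<in> SP" using that subspace_scale[OF SPsub] by blast
            ultimately show ?thesis by (simp only: mem_Collect_eq)
          qed
        qed
      next
        case (step x)
        then show ?case using gen by blast
      qed
    qed
    then have "r * s \<in> set_plus I J" using CANC[OF IJsub] SPsub2 by blast
    then show "r * s \<in> set_plus I (J_gr (*) Rg)" by (simp add: J_def)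
  qed
  have iii_ii: "gr_weakly_J_semiprime_ideal Rg I" if "gr_weakly_J_semiprime_ideal Rg L" "U = ideal_times_module sc L" for L
  proof -
    have gL: "graded_ideal Rg L" using that(1)
      by (simp add: gr_weakly_J_semiprime_ideal_def gr_weakly_J_semiprime_def graded_ideal_def)
    have "I = L"
    proof
      show "L \<subseteq> I" unfolding I_def colon_def using that(2) itm_base by blast
      show "I \<subseteq> L"
      proof
        fix a assume "a \<in> I"
        then have "sc a m \<in> ideal_times_module sc L" for m using that(2) by (simp add: I_def colon_def)
        then show "a \<in> L" using CANC[OF subK[OF gL]] by blast
      qed
    qed
    then show ?thesis using that(1) by simp
  qed
  show ?thesis unfolding I_def[symmetric]
    using ii_i i_ii iii_ii UI by blast
qed

end
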